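(* Let $G$ be a group, $S\subseteq G$ a subset and $H$ a subgroup of $G$. Suppose the composite map $S\hookrightarrow G\to G/H$ is surjective and at least one fibre of this map contains exactly one element. Then $H$ is a minimal complement of $S$ in $G$.
   Context: $G/H$ denotes the set of left cosets $gH$, i.e. classes of the relation $g_1\sim g_2$ iff $g_1^{-1}g_2\in H$. A nonempty $W'\subseteq G$ is a complement to $W$ if $WW'=G$; it is minimal if no proper subset of $W'$ is a complement to $W$. *)

theory Defs
  imports "HOL-Algebra.Algebra"
begin

definition left_cosets :: "('a, 'b) monoid_scheme \<Rightarrow> 'a set \<Rightarrow> 'a set set" where
  "left_cosets G H = {g <#\<^bsub>G\<^esub> H | g. g \<in> carrier G}"

definition is_complement :: "('a, 'b) monoid_scheme \<Rightarrow> 'a set \<Rightarrow> 'a set \<Rightarrow> bool" where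
  "is_complement G W W' \<longleftrightarrow> W' \<noteq> {} \<and> W' \<subseteq> carrier G \<and> W <#>\<^bsub>G\<^esub> W' = carrier G"

definition is_minimal_complement :: "('a, 'b) monoid_scheme \<Rightarrow> 'a set \<Rightarrow> 'a set \<Rightarrow> bool" where
  "is_minimal_complement G W W' \<longleftrightarrow>
     is_complement G W W' \<and> (\<forall>W''. W'' \<subset> W' \<longrightarrow> \<not> is_complement G W W'')"

end

theory Submission
  imports Defs
begin

theorem lemma4p2:
  fixes G (structure) and S H :: "'a set"
  assumes "group G"
    and "S \<subseteq> carrier G"
    and "subgroup H G"
    and "(\<lambda>s. s <# H) ` S = left_cosets G H"
    and "\<exists>C \<in> left_cosets G H. card {s \<in> S. s <# H = C} = 1"
  shows "is_minimal_complement G S H"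
proof -
  interpret group G by fact
  have Hc: "H \<subseteq> carrier G" using assms(3) subgroup.subset by blast
  have one: "\<one> \<in> H" using assms(3) subgroup.one_closed by blast
  have comp: "is_complement G S H"
    unfolding is_complement_def
  proof (intro conjI)
    show "H \<noteq> {}" using one by blast
    show "H \<subseteq> carrier G" by fact
    show "S <#> H = carrier G"
    proof
      show "S <#> H \<subseteq> carrier G" using assms(2) Hc by (auto simp: set_mult_def)
      show "carrier G \<subseteq> S <#> H"
      proof
        fix g assume g: "g \<in> carrier G"
        have "g <# H \<in> left_cosets G H" using g unfolding left_cosets_def by blast
        then obtain s where s: "s \<in> S" "s <# H = g <# H" using assms(4) by (metis imageE)
        have "g \<in> g <# H" using g one unfolding l_coset_def by force
        then have "g \<in> s <# H" using s by simp
        then obtain h where "h \<in> H" "g = s \<otimes> h" unfolding l_coset_def by blast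
        then show "g \<in> S <#> H" using s unfolding set_mult_def by blast
      qed
    qed
  qed
  obtain C where C: "card {s \<in> S. s <# H = C} = 1" using assms(5) by blast
  then obtain s0 where s0: "{s \<in> S. s <# H = C} = {s0}" using card_1_singletonE by blast
  have s0S: "s0 \<in> S" and s0C: "s0 <# H = C" using s0 by auto
  have s0G: "s0 \<in> carrier G" using s0S assms(2) by blast
  have uniq: "s = s0" if "s \<in> S" "s <# H = s0 <# H" for s
    using s0 that s0C by blast
  have "\<not> is_complement G S W''" if W: "W'' \<subset> H" for W''
  proof
    assume c: "is_complement G S W''"
    obtain h where h: "h \<in> H" "h \<notin> W''" using W by blast
    have hG: "h \<in> carrier G" using h Hc by blast
    have "s0 \<otimes> h \<in> S <#> W''" using c s0G hG unfolding is_complement_def by auto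
    then obtain s h' where sh: "s \<in> S" "h' \<in> W''" "s0 \<otimes> h = s \<otimes> h'"
      unfolding set_mult_def by blast
    have h'H: "h' \<in> H" using sh W by blast
    have h'G: "h' \<in> carrier G" using h'H Hc by blast
    have sG: "s \<in> carrier G" using sh assms(2) by blast
    have "s = s0 \<otimes> (h \<otimes> inv h')"
      using sh(3) sG h'G s0G hG
      by (metis inv_solve_right m_assoc inv_closed m_closed)
    moreover have "h \<otimes> inv h' \<in> H"
      using h(1) h'H assms(3) by (simp add: subgroup.m_closed subgroup.m_inv_closed)
    ultimately have "s \<in> s0 <# H" unfolding l_coset_def by blast
    then have "s0 <# H = s <# H" using l_repr_independence[OF _ s0G assms(3)] by blast
    then have "s = s0" using uniq sh(1) by simp
    then have "h = h'" using sh(3) s0G hG h'G by simp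
    then show False using h sh by simp
  qed
  then show ?thesis using comp unfolding is_minimal_complement_def by blast
qed

end
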